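(* Let $W$ be a suitable basis of $A$ at $\{\beta_1,\ldots,\beta_I\}$ and let $e\in C[x]$, $M\in C[x]^{r\times r}$ with $SW=\frac1eMW$. Let $h=\frac{cW}{\tilde u}\in A$ with $c=(c_1,\dots,c_r)\in C[x]^r$, $\tilde u\in C[x]$, $\gcd(\tilde u,c_1,\dots,c_r)=1$, and $\tilde u\prod_{i=1}^I(x-\beta_i)$ shift-free. If $h$ is summable in $A$, then $\tilde u$ divides $e$ and $h=\Delta(bW)$ for some $b\in C[x]^r$.
   Context: Let $C$ be a field of characteristic zero and $\bar C$ its algebraic closure; $\sigma(f)(x)=f(x+1)$, $C(x)[S]$ the Ore algebra with $Sf=\sigma(f)S$, $\Delta=S-1$. Fix $L=\sum_{i=0}^r\ell_iS^i\in C[x][S]$ with $\ell_0\ell_r\ne0$ and $A=C(x)[S]/C(x)[S]L$; $f\in A$ is summable if $f=\Delta g$ for some $g\in A$. For a basis $W=(\omega_1,\dots,\omega_r)$, $a\in C[x]^r$, $u\in C[x]$: $\frac{aW}{u}=\frac1u\sum a_i\omega_i$, $SW=(S\omega_i)_i$. A polynomial $p$ is shift-free if $\gcd(p,\sigma^i(p))=1$ for all nonzero $i\in\mathbb Z$. For $\alpha\in\bar C$, operators $P=\sum p_iS^i$ act on $b:\alpha+\mathbb Z\to\bar C((q))$ by $(P\cdot b)(z)=\sum p_i(z+q)b(z+i)$; $\operatorname{Sol}_\alpha(L)=\{b:L\cdot b=0\}$; $\operatorname{val}_\alpha(f)=\min_{b\in\operatorname{Sol}_\alpha(L)}(\nu_q((f\cdot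 b)(\alpha))-\liminf_n\nu_q(b(\alpha-n)))$; $f$ integral at $\alpha$ iff $\operatorname{val}_\alpha(f)\ge0$; a local integral basis at $\alpha$ is a basis of the $C(x)_\alpha$-module of integral elements ($C(x)_\alpha=\{p/q:q(\alpha)\ne0\}$), and at a set if at each point. On $\alpha+\mathbb Z$, $\beta<\gamma$ means $\beta-\gamma$ is a negative integer. Suitable bases: let $\alpha_1+\mathbb Z,\dots,\alpha_I+\mathbb Z$ be the distinct orbits containing a root of $\ell_0\ell_r$; in orbit $i$ let $\alpha_{i,1}<\dots<\alpha_{i,J_i}$ be these roots, and choose $\beta_i\in\alpha_i+\mathbb Z$ with $\alpha_{i,J_i}\le\beta_i$, such that if $\alpha_{i,J_i},\alpha_{i',J_{i'}}$ are $C$-conjugate then $\beta_i-\alpha_{i,J_i}=\beta_{i'}-\alpha_{i',J_{i'}}$. Let $Z=\bigcup_i\{\gamma\in\alpha_i+\mathbb Z\mid\alpha_{i,1}<\gamma\le\beta_i\}$. A $C(x)$-basis $W$ of $A$ is suitable at $\{\beta_1,\dots,\beta_I\}$ if it is a local integral basis at $Z$ and generates the same $C(x)_\alpha$-module as $\{1,S,\dots,S^{r-1}\}$ for every $\alpha\in\bar C\setminus Z$. *)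

theory Defs
  imports "HOL-Algebra.Algebraic_Closure_Type"
          "HOL-Computational_Algebra.Normalized_Fraction"
          "HOL-Computational_Algebra.Formal_Laurent_Series"
          "HOL-Library.Extended_Real"
begin

text \<open>
  C is a type 'a of class field_char_0 (plus the standard field_gcd
  structure so that gcds of polynomials are available); the algebraic closure of C is
  the type 'a alg_closure with embedding to_ac.  C(x) is the fraction field
  'a poly fract.  The operator L = sum_{i=0..r} ell i S^i is given by its coefficient
  function ell and its order r.  The module A = C(x)[S]/C(x)[S]L is represented by
  coordinate vectors v :: nat => C(x) w.r.t. the standard basis 1,S,...,S^(r-1)
  (v i = 0 for i >= r); every class has a unique representative of S-degree < r.
\<close>

type_synonym 'a ratfun = "'a poly fract"

definition pshift :: "'a::comm_ring_1 poly \<Rightarrow> 'a poly" where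
  "pshift p = pcompose p [:1, 1:]"

definition pshift_int :: "int \<Rightarrow> 'a::comm_ring_1 poly \<Rightarrow> 'a poly" where
  "pshift_int i p = pcompose p [:of_int i, 1:]"

definition rshift :: "'a::field_gcd ratfun \<Rightarrow> 'a ratfun" where
  "rshift f = (case quot_of_fract f of (p, q) \<Rightarrow> Fract (pshift p) (pshift q))"

definition Avec :: "nat \<Rightarrow> (nat \<Rightarrow> 'a::field_gcd ratfun) set" where
  "Avec r = {v. \<forall>i\<ge>r. v i = 0}"

definition lincomb :: "nat \<Rightarrow> (nat \<Rightarrow> 'a::field_gcd ratfun) \<Rightarrow> (nat \<Rightarrow> nat \<Rightarrow> 'a ratfun)
    \<Rightarrow> (nat \<Rightarrow> 'a ratfun)" where
  "lincomb r a W = (\<lambda>j. \<Sum>i<r. a i * W i j)"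

text \<open>S applied to the class of sum_{i<r} v_i S^i, reduced modulo L.\<close>
definition shiftA :: "(nat \<Rightarrow> 'a::field_gcd poly) \<Rightarrow> nat \<Rightarrow> (nat \<Rightarrow> 'a ratfun) \<Rightarrow> (nat \<Rightarrow> 'a ratfun)" where
  "shiftA ell r v = (\<lambda>j. if j < r then
       (if j = 0 then 0 else rshift (v (j - 1))) - rshift (v (r - 1)) * Fract (ell j) (ell r)
     else 0)"

definition deltaA :: "(nat \<Rightarrow> 'a::field_gcd poly) \<Rightarrow> nat \<Rightarrow> (nat \<Rightarrow> 'a ratfun) \<Rightarrow> (nat \<Rightarrow> 'a ratfun)" where
  "deltaA ell r v = (\<lambda>j. shiftA ell r v j - v j)"

definition summable_A :: "(nat \<Rightarrow> 'a::field_gcd poly) \<Rightarrow> nat \<Rightarrow> (nat \<Rightarrow> 'a ratfun) \<Rightarrow> bool" where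
  "summable_A ell r f \<longleftrightarrow> (\<exists>g\<in>Avec r. f = deltaA ell r g)"

definition is_basis_A :: "nat \<Rightarrow> (nat \<Rightarrow> nat \<Rightarrow> 'a::field_gcd ratfun) \<Rightarrow> bool" where
  "is_basis_A r W \<longleftrightarrow> (\<forall>i<r. W i \<in> Avec r)
     \<and> (\<forall>a. lincomb r a W = (\<lambda>_. 0) \<longrightarrow> (\<forall>i<r. a i = 0))
     \<and> (\<forall>f\<in>Avec r. \<exists>a. f = lincomb r a W)"

definition peval_fls :: "'a::field poly \<Rightarrow> 'a alg_closure \<Rightarrow> 'a alg_closure fls" where
  "peval_fls p z = poly (map_poly (\<lambda>c. fls_const (to_ac c)) p) (fls_const z + fls_X)"

definition reval_fls :: "'a::field_gcd ratfun \<Rightarrow> 'a alg_closure \<Rightarrow> 'a alg_closure fls" where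
  "reval_fls f z = (case quot_of_fract f of (p, q) \<Rightarrow> peval_fls p z / peval_fls q z)"

definition nu_q :: "'b::zero fls \<Rightarrow> ereal" where
  "nu_q s = (if s = 0 then \<infinity> else ereal (of_int (fls_subdegree s)))"

text \<open>A function b : alpha + Z -> closure((q)) is encoded as b' :: int => _, b' n = b(alpha+n).
  Sol_alpha(L) = {b. L . b = 0}.\<close>
definition Sol :: "(nat \<Rightarrow> 'a::field poly) \<Rightarrow> nat \<Rightarrow> 'a alg_closure \<Rightarrow> (int \<Rightarrow> 'a alg_closure fls) set" where
  "Sol ell r \<alpha> = {b. \<forall>n::int. (\<Sum>i\<le>r. peval_fls (ell i) (\<alpha> + of_int n) * b (n + int i)) = 0}"

text \<open>(f . b)(alpha) for f = sum_{i<r} f_i S^i.\<close>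
definition act_at :: "nat \<Rightarrow> (nat \<Rightarrow> 'a::field_gcd ratfun) \<Rightarrow> 'a alg_closure
    \<Rightarrow> (int \<Rightarrow> 'a alg_closure fls) \<Rightarrow> 'a alg_closure fls" where
  "act_at r f \<alpha> b = (\<Sum>i<r. reval_fls (f i) \<alpha> * b (int i))"

text \<open>f integral at alpha iff val_alpha(f) >= 0, i.e. for every b in Sol_alpha(L):
  nu_q((f.b)(alpha)) - liminf_n nu_q(b(alpha - n)) >= 0.\<close>
definition integral_at :: "(nat \<Rightarrow> 'a::field_gcd poly) \<Rightarrow> nat \<Rightarrow> 'a alg_closure
    \<Rightarrow> (nat \<Rightarrow> 'a ratfun) \<Rightarrow> bool" where
  "integral_at ell r \<alpha> f \<longleftrightarrow> (\<forall>b\<in>Sol ell r \<alpha>.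
      liminf (\<lambda>n::nat. nu_q (b (- int n))) \<le> nu_q (act_at r f \<alpha> b))"

definition loc_ring :: "'a alg_closure \<Rightarrow> 'a::field_gcd ratfun set" where
  "loc_ring \<alpha> = {f. \<exists>p q. f = Fract p q \<and> poly (map_poly to_ac q) \<alpha> \<noteq> 0}"

definition local_integral_basis :: "(nat \<Rightarrow> 'a::field_gcd poly) \<Rightarrow> nat \<Rightarrow> 'a alg_closure
    \<Rightarrow> (nat \<Rightarrow> nat \<Rightarrow> 'a ratfun) \<Rightarrow> bool" where
  "local_integral_basis ell r \<alpha> W \<longleftrightarrow>
     (\<forall>i<r. W i \<in> Avec r \<and> integral_at ell r \<alpha> (W i))
     \<and> (\<forall>a. (\<forall>i<r. a i \<in> loc_ring \<alpha>) \<longrightarrow> lincomb r a W = (\<lambda>_. 0) \<longrightarrow> (\<forall>i<r. a i = 0))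
     \<and> (\<forall>f\<in>Avec r. integral_at ell r \<alpha> f \<longrightarrow>
           (\<exists>a. (\<forall>i<r. a i \<in> loc_ring \<alpha>) \<and> f = lincomb r a W))"

definition same_local_module :: "nat \<Rightarrow> 'a alg_closure \<Rightarrow> (nat \<Rightarrow> nat \<Rightarrow> 'a::field_gcd ratfun) \<Rightarrow> bool" where
  "same_local_module r \<alpha> W \<longleftrightarrow>
     {lincomb r a W | a. \<forall>i<r. a i \<in> loc_ring \<alpha>} = {f \<in> Avec r. \<forall>i<r. f i \<in> loc_ring \<alpha>}"

definition same_orbit :: "'b::ring_1 \<Rightarrow> 'b \<Rightarrow> bool" where
  "same_orbit a b \<longleftrightarrow> (\<exists>n::int. b = a + of_int n)"

definition orb_le :: "'b::ring_1 \<Rightarrow> 'b \<Rightarrow> bool" where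
  "orb_le a b \<longleftrightarrow> (\<exists>n::nat. b = a + of_nat n)"

definition orb_lt :: "'b::ring_1 \<Rightarrow> 'b \<Rightarrow> bool" where
  "orb_lt a b \<longleftrightarrow> (\<exists>n::nat. n > 0 \<and> b = a + of_nat n)"

definition roots_l0lr :: "(nat \<Rightarrow> 'a::field poly) \<Rightarrow> nat \<Rightarrow> 'a alg_closure set" where
  "roots_l0lr ell r = {\<alpha>. poly (map_poly to_ac (ell 0 * ell r)) \<alpha> = 0}"

definition C_conjugate :: "'a::field alg_closure \<Rightarrow> 'a alg_closure \<Rightarrow> bool" where
  "C_conjugate a b \<longleftrightarrow> (\<forall>p::'a poly. poly (map_poly to_ac p) a = 0 \<longleftrightarrow> poly (map_poly to_ac p) b = 0)"

definition is_max_root :: "(nat \<Rightarrow> 'a::field poly) \<Rightarrow> nat \<Rightarrow> 'a alg_closure \<Rightarrow> 'a alg_closure \<Rightarrow> bool" where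
  "is_max_root ell r \<beta> m \<longleftrightarrow> m \<in> roots_l0lr ell r \<and> same_orbit m \<beta>
     \<and> (\<forall>\<rho>\<in>roots_l0lr ell r. same_orbit \<rho> \<beta> \<longrightarrow> orb_le \<rho> m)"

definition admissible_betas :: "(nat \<Rightarrow> 'a::field poly) \<Rightarrow> nat \<Rightarrow> 'a alg_closure set \<Rightarrow> bool" where
  "admissible_betas ell r B \<longleftrightarrow>
     (\<forall>\<rho>\<in>roots_l0lr ell r. \<exists>!\<beta>. \<beta> \<in> B \<and> same_orbit \<rho> \<beta>)
     \<and> (\<forall>\<beta>\<in>B. \<exists>\<rho>\<in>roots_l0lr ell r. same_orbit \<rho> \<beta>)
     \<and> (\<forall>\<beta>\<in>B. \<forall>\<rho>\<in>roots_l0lr ell r. same_orbit \<rho> \<beta> \<longrightarrow> orb_le \<rho> \<beta>)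
     \<and> (\<forall>\<beta>\<in>B. \<forall>\<beta>'\<in>B. \<forall>m m'. is_max_root ell r \<beta> m \<and> is_max_root ell r \<beta>' m'
           \<and> C_conjugate m m' \<longrightarrow> \<beta> - m = \<beta>' - m')"

definition Zset :: "(nat \<Rightarrow> 'a::field poly) \<Rightarrow> nat \<Rightarrow> 'a alg_closure set \<Rightarrow> 'a alg_closure set" where
  "Zset ell r B = {\<gamma>. \<exists>\<beta>\<in>B. orb_le \<gamma> \<beta> \<and> (\<exists>\<rho>\<in>roots_l0lr ell r. orb_lt \<rho> \<gamma>)}"

definition suitable_basis :: "(nat \<Rightarrow> 'a::field_gcd poly) \<Rightarrow> nat \<Rightarrow> 'a alg_closure set
    \<Rightarrow> (nat \<Rightarrow> nat \<Rightarrow> 'a ratfun) \<Rightarrow> bool" where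
  "suitable_basis ell r B W \<longleftrightarrow> admissible_betas ell r B \<and> is_basis_A r W
     \<and> (\<forall>\<alpha>\<in>Zset ell r B. local_integral_basis ell r \<alpha> W)
     \<and> (\<forall>\<alpha>. \<alpha> \<notin> Zset ell r B \<longrightarrow> same_local_module r \<alpha> W)"

definition shift_free :: "'a::field alg_closure poly \<Rightarrow> bool" where
  "shift_free p \<longleftrightarrow> (\<forall>i::int. i \<noteq> 0 \<longrightarrow> gcd p (pshift_int i p) = 1)"

end

theory Submission
  imports Defs
begin

abbreviation pev :: "'a::field poly \<Rightarrow> 'a alg_closure \<Rightarrow> 'a alg_closure" where
  "pev p a \<equiv> poly (map_poly to_ac p) a"

lemma mp_add: "map_poly to_ac (p + q) = map_poly to_ac p + map_poly (to_ac :: 'a::field \<Rightarrow> _) q"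
  by (rule poly_eqI) (simp add: coeff_map_poly)
lemma mp_minus: "map_poly to_ac (- p) = - map_poly (to_ac :: 'a::field \<Rightarrow> _) p"
  by (rule poly_eqI) (simp add: coeff_map_poly)
lemma mp_diff: "map_poly to_ac (p - q) = map_poly to_ac p - map_poly (to_ac :: 'a::field \<Rightarrow> _) q"
  by (rule poly_eqI) (simp add: coeff_map_poly)
lemma mp_smult: "map_poly to_ac (smult c q) = smult (to_ac c) (map_poly (to_ac :: 'a::field \<Rightarrow> _) q)"
  by (rule poly_eqI) (simp add: coeff_map_poly)
lemma mp_mult: "map_poly to_ac (p * q) = map_poly to_ac p * map_poly (to_ac :: 'a::field \<Rightarrow> _) q"
proof (induction p)
  case 0 then show ?case by simp
next
  case (pCons a p)
  then show ?case by (simp add: map_poly_pCons mp_add mp_smult algebra_simps)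
qed
lemma mp_pcompose: "map_poly to_ac (pcompose p q) = pcompose (map_poly to_ac p) (map_poly (to_ac :: 'a::field \<Rightarrow> _) q)"
proof (induction p)
  case 0 then show ?case by simp
next
  case (pCons a p)
  then show ?case by (simp add: map_poly_pCons pcompose_pCons mp_add mp_mult)
qed
lemma mp_eq0: "map_poly to_ac p = 0 \<longleftrightarrow> (p :: 'a::field poly) = 0"
  by (simp add: map_poly_eq_0_iff)

lemma pev_add[simp]: "pev (p + q) a = pev p a + pev q a" by (simp add: mp_add)
lemma pev_diff[simp]: "pev (p - q) a = pev p a - pev q a" by (simp add: mp_diff)
lemma pev_minus[simp]: "pev (- p) a = - pev p a" by (simp add: mp_minus)
lemma pev_mult[simp]: "pev (p * q) a = pev p a * pev q a" by (simp add: mp_mult)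
lemma pev_pshift: "pev (pshift p) a = pev p (a + 1)"
  by (simp add: pshift_def mp_pcompose poly_pcompose map_poly_pCons add.commute)
lemma pev_pshift_int: "pev (pshift_int i p) a = pev p (a + of_int i)"
  by (simp add: pshift_int_def mp_pcompose poly_pcompose map_poly_pCons add.commute)

lemma coprime_no_common_root:
  fixes p q :: "'a::field_gcd poly"
  assumes "coprime p q" "pev p a = 0" "pev q a = 0"
  shows False
proof -
  obtain s t where "s * p + t * q = 1"
    using assms(1) by (metis bezout_coefficients_fst_snd coprime_iff_gcd_eq_1)
  then have "pev (s * p + t * q) a = pev 1 a" by simp
  then show False using assms by simp
qed

lemma loc_iff: "x \<in> loc_ring a \<longleftrightarrow> pev (snd (quot_of_fract x)) a \<noteq> 0"
proof
  assume "x \<in> loc_ring a"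
  then obtain p q where x: "x = Fract p q" and q: "pev q a \<noteq> 0" by (auto simp: loc_ring_def)
  then have q0: "q \<noteq> 0" by auto
  obtain p' q' where pq: "quot_of_fract x = (p', q')" by (cases "quot_of_fract x")
  have q'0: "q' \<noteq> 0" using snd_quot_of_fract_nonzero[of x] pq by simp
  have "Fract p' q' = x" using Fract_quot_of_fract[of x] pq by simp
  then have "p' * q = p * q'" using x q0 q'0 by (simp add: eq_fract)
  then have e: "pev p' a * pev q a = pev p a * pev q' a" by (metis pev_mult)
  have cop: "coprime p' q'" using coprime_quot_of_fract[of x] pq by simp
  show "pev (snd (quot_of_fract x)) a \<noteq> 0"
  proof
    assume "pev (snd (quot_of_fract x)) a = 0"
    then have "pev q' a = 0" using pq by simp
    then have "pev p' a = 0" using e q by simp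
    then show False using coprime_no_common_root[OF cop] \<open>pev q' a = 0\<close> by blast
  qed
next
  assume "pev (snd (quot_of_fract x)) a \<noteq> 0"
  then show "x \<in> loc_ring a" unfolding loc_ring_def
    by (intro CollectI exI[of _ "fst (quot_of_fract x)"] exI[of _ "snd (quot_of_fract x)"]) simp
qed

lemma loc_Fract: "pev q a \<noteq> 0 \<Longrightarrow> Fract p q \<in> loc_ring a"
  by (auto simp: loc_ring_def)

lemma loc_0[simp]: "0 \<in> loc_ring a"
  using loc_Fract[of 1 a 0] by (simp add: fract_collapse)

lemma loc_1[simp]: "1 \<in> loc_ring a"
  using loc_Fract[of 1 a 1] by (simp add: fract_collapse)

lemma loc_polyI: "Fract p 1 \<in> loc_ring a"
  by (rule loc_Fract) simp

lemma loc_ex: assumes "x \<in> loc_ring a"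
  obtains p q where "x = Fract p q" "pev q a \<noteq> 0" "q \<noteq> 0"
  using assms by (auto simp: loc_ring_def) (metis map_poly_0 poly_0)

lemma loc_add: assumes "x \<in> loc_ring a" "y \<in> loc_ring a" shows "x + y \<in> loc_ring a"
proof -
  from assms obtain p q p' q' where "x = Fract p q" "pev q a \<noteq> 0" "y = Fract p' q'" "pev q' a \<noteq> 0"
    "q \<noteq> 0" "q' \<noteq> 0" by (metis loc_ex)
  then show ?thesis by (auto intro!: loc_Fract)
qed

lemma loc_mult: assumes "x \<in> loc_ring a" "y \<in> loc_ring a" shows "x * y \<in> loc_ring a"
proof -
  from assms obtain p q p' q' where "x = Fract p q" "pev q a \<noteq> 0" "y = Fract p' q'" "pev q' a \<noteq> 0"
    "q \<noteq> 0" "q' \<noteq> 0" by (metis loc_ex)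
  then show ?thesis by (auto intro!: loc_Fract)
qed

lemma loc_uminus: assumes "x \<in> loc_ring a" shows "- x \<in> loc_ring a"
proof -
  from assms obtain p q where "x = Fract p q" "pev q a \<noteq> 0" "q \<noteq> 0" by (metis loc_ex)
  then show ?thesis by (auto intro!: loc_Fract)
qed

lemma loc_diff: assumes "x \<in> loc_ring a" "y \<in> loc_ring a" shows "x - y \<in> loc_ring a"
  using loc_add[OF assms(1) loc_uminus[OF assms(2)]] by simp

lemma loc_sum: "(\<And>i. i \<in> A \<Longrightarrow> f i \<in> loc_ring a) \<Longrightarrow> (\<Sum>i\<in>A. f i) \<in> loc_ring a"
  by (induction A rule: infinite_finite_induct) (auto intro: loc_add)

lemma loc_all_poly:
  fixes x :: "'a::field_gcd poly fract"
  assumes "\<And>a. x \<in> loc_ring a"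
  shows "\<exists>p. x = Fract p 1"
proof -
  obtain p q where pq: "quot_of_fract x = (p, q)" by (cases "quot_of_fract x")
  have "normalize q = q" using normalize_snd_quot_of_fract[of x] pq by simp
  have q0: "q \<noteq> 0" using snd_quot_of_fract_nonzero[of x] pq by simp
  have "degree (map_poly to_ac q) = 0"
  proof (rule ccontr)
    assume "degree (map_poly to_ac q) \<noteq> 0"
    then obtain a where "pev q a = 0" using alg_closed_imp_poly_has_root by blast
    then show False using assms[of a] pq by (simp add: loc_iff)
  qed
  then have "degree q = 0" by (simp add: degree_map_poly)
  then obtain c where c: "q = [:c:]" by (metis degree_eq_zeroE)
  then have "c \<noteq> 0" using q0 by auto
  have "x = Fract p q" using Fract_quot_of_fract[of x] pq by simp
  also have "\<dots> = Fract (smult (inverse c) p) 1" using \<open>c \<noteq> 0\<close> c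
    by (simp add: eq_fract)
  finally show ?thesis by blast
qed

lemma pshift_mult: "pshift (p * q) = pshift p * pshift q" by (simp add: pshift_def pcompose_mult)
lemma pshift_add: "pshift (p + q) = pshift p + pshift q" by (simp add: pshift_def pcompose_add)
lemma pshift_diff: "pshift (p - q) = pshift p - pshift (q::'a::comm_ring_1 poly)" by (simp add: pshift_def pcompose_diff)
lemma pshift_minus: "pshift (- p) = - pshift (p::'a::comm_ring_1 poly)" by (simp add: pshift_def pcompose_uminus)
lemma pshift_0[simp]: "pshift 0 = 0" by (simp add: pshift_def)
lemma pshift_eq0[simp]: "pshift p = 0 \<longleftrightarrow> (p::'a::idom poly) = 0"
  using pcompose_eq_0[of p "[:1,1:]"] by (auto simp: pshift_def)
lemma pshift_unshift: "pshift (pshift_int (-1) p) = (p::'a::comm_ring_1 poly)"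
  by (simp add: pshift_def pshift_int_def pcompose_assoc[symmetric] pcompose_pCons)

lemma rshift_Fract: "rshift (Fract a b) = Fract (pshift a) (pshift (b::'a::field_gcd poly))"
proof (cases "b = 0")
  case True then show ?thesis by (simp add: fract_collapse rshift_def)
next
  case False
  obtain p q where pq: "quot_of_fract (Fract a b) = (p, q)" by (cases "quot_of_fract (Fract a b)")
  have q0: "q \<noteq> 0" using snd_quot_of_fract_nonzero[of "Fract a b"] pq by simp
  have "Fract p q = Fract a b" using Fract_quot_of_fract[of "Fract a b"] pq by simp
  then have "p * b = a * q" using q0 False by (simp add: eq_fract)
  then have "pshift p * pshift b = pshift a * pshift q" by (metis pshift_mult)
  then show ?thesis using pq q0 False by (simp add: rshift_def eq_fract)
qed

lemma rshift_add: "rshift (x + y) = rshift x + rshift y"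
  by (cases x; cases y) (simp add: rshift_Fract pshift_mult pshift_add)
lemma rshift_mult: "rshift (x * y) = rshift x * rshift y"
  by (cases x; cases y) (simp add: rshift_Fract pshift_mult)
lemma rshift_minus: "rshift (- x) = - rshift x"
  by (cases x) (simp add: rshift_Fract pshift_minus)
lemma rshift_diff: "rshift (x - y) = rshift x - rshift y"
  by (cases x; cases y) (simp add: rshift_Fract pshift_mult pshift_diff)
lemma rshift_0[simp]: "rshift 0 = 0" by (simp add: rshift_def fract_collapse)

lemma rshift_inj: assumes "rshift x = rshift y" shows "x = y"
proof -
  have "rshift (x - y) = 0" using assms by (simp add: rshift_diff)
  moreover obtain a b where "x - y = Fract a b" "b \<noteq> 0" by (cases "x - y")
  ultimately have "a = 0" by (simp add: rshift_Fract eq_fract fract_expand)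
  then show ?thesis using \<open>x - y = Fract a b\<close> by (simp add: fract_collapse)
qed

lemma loc_rshift: "rshift x \<in> loc_ring a \<longleftrightarrow> x \<in> loc_ring (a + 1)"
proof
  assume "x \<in> loc_ring (a + 1)"
  then obtain p q where "x = Fract p q" "pev q (a+1) \<noteq> 0" "q \<noteq> 0" by (metis loc_ex)
  then show "rshift x \<in> loc_ring a" by (auto simp: rshift_Fract pev_pshift intro!: loc_Fract)
next
  assume "rshift x \<in> loc_ring a"
  then obtain p q where pq: "rshift x = Fract p q" "pev q a \<noteq> 0" "q \<noteq> 0" by (metis loc_ex)
  let ?y = "Fract (pshift_int (-1) p) (pshift_int (-1) q)"
  have "rshift ?y = Fract p q" by (simp add: rshift_Fract pshift_unshift)
  then have "x = ?y" using pq rshift_inj by metis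
  moreover have "pev (pshift_int (-1) q) (a + 1) \<noteq> 0" using pq by (simp add: pev_pshift_int)
  ultimately show "x \<in> loc_ring (a + 1)" by (simp add: loc_Fract)
qed

definition PV :: "'a::field poly \<Rightarrow> 'a alg_closure \<Rightarrow> 'a alg_closure poly" where
  "PV p z = pcompose (map_poly to_ac p) [:z, 1:]"

lemma peval_PV: "peval_fls p z = fps_to_fls (fps_of_poly (PV p z))"
proof (induction p)
  case 0 then show ?case by (simp add: peval_fls_def PV_def)
next
  case (pCons a p)
  have A: "peval_fls (pCons a p) z = fls_const (to_ac a) + (fls_const z + fls_X) * peval_fls p z"
    by (simp add: peval_fls_def map_poly_pCons)
  have e: "PV (pCons a p) z = [:to_ac a:] + [:z,1:] * PV p z"
    by (simp add: PV_def map_poly_pCons pcompose_pCons)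
  have "fps_of_poly (PV (pCons a p) z) = fps_const (to_ac a) + (fps_X + fps_const z) * fps_of_poly (PV p z)"
    unfolding e fps_of_poly_add fps_of_poly_mult fps_of_poly_linear fps_of_poly_const ..
  then have "fps_to_fls (fps_of_poly (PV (pCons a p) z)) = fls_const (to_ac a) + (fls_X + fls_const z) * fps_to_fls (fps_of_poly (PV p z))"
    by (simp only: fls_times_fps_to_fls fps_to_fls_plus fps_const_to_fls fps_X_to_fls)
  then have "fls_const (to_ac a) + (fls_const z + fls_X) * peval_fls p z = fps_to_fls (fps_of_poly (PV (pCons a p) z))"
    using pCons.IH by (simp add: add.commute)
  then show ?case using A by simp
qed

lemma PV_mult: "PV (p * q) z = PV p z * PV q z" by (simp add: PV_def mp_mult pcompose_mult)
lemma PV_add: "PV (p + q) z = PV p z + PV q z" by (simp add: PV_def mp_add pcompose_add)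
lemma PV_diff: "PV (p - q) z = PV p z - PV q z" by (simp add: PV_def mp_diff pcompose_diff)
lemma PV_minus: "PV (- p) z = - PV p z" by (simp add: PV_def mp_minus pcompose_uminus)
lemma PV_eq0: "PV p z = 0 \<longleftrightarrow> p = 0"
  using pcompose_eq_0[of "map_poly to_ac p" "[:z,1:]"] by (auto simp: PV_def mp_eq0)
lemma PV_coeff0: "coeff (PV p z) 0 = pev p z"
  by (simp add: PV_def poly_0_coeff_0[symmetric] poly_pcompose)
lemma PV_pshift: "PV (pshift p) z = PV p (z + 1)"
  by (simp add: PV_def pshift_def mp_pcompose pcompose_assoc[symmetric] map_poly_pCons pcompose_pCons add.commute)

lemma peval_mult[simp]: "peval_fls (p * q) z = peval_fls p z * peval_fls q z"
  by (simp add: peval_PV PV_mult fps_of_poly_mult fls_times_fps_to_fls)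
lemma peval_add[simp]: "peval_fls (p + q) z = peval_fls p z + peval_fls q z"
  by (simp add: peval_PV PV_add fps_of_poly_add)
lemma peval_diff[simp]: "peval_fls (p - q) z = peval_fls p z - peval_fls q z"
  by (simp add: peval_PV PV_diff fps_of_poly_diff)
lemma peval_minus[simp]: "peval_fls (- p) z = - peval_fls p z"
  by (simp add: peval_PV PV_minus fps_of_poly_uminus)
lemma peval_1[simp]: "peval_fls 1 z = 1"
  by (simp add: peval_fls_def)
lemma peval_0[simp]: "peval_fls 0 z = 0"
  by (simp add: peval_fls_def)
lemma peval_nz: "p \<noteq> 0 \<Longrightarrow> peval_fls p z \<noteq> 0"
  by (simp add: peval_PV PV_eq0 fps_of_poly_eq_iff[of _ 0, simplified])
lemma peval_eq0_iff[simp]: "peval_fls p z = 0 \<longleftrightarrow> p = 0"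
  using peval_nz by auto
lemma peval_pshift: "peval_fls (pshift p) z = peval_fls p (z + 1)"
  by (simp add: peval_PV PV_pshift)
lemma peval_subdeg_ge0: "fls_subdegree (peval_fls p z) \<ge> 0"
  by (simp add: peval_PV fls_subdegree_fls_to_fps_gt0)
lemma peval_subdeg_0: "pev p z \<noteq> 0 \<Longrightarrow> fls_subdegree (peval_fls p z) = 0"
  by (simp add: peval_PV fls_subdegree_fls_to_fps PV_coeff0)

lemma reval_Fract: assumes "q \<noteq> 0"
  shows "reval_fls (Fract p q) z = peval_fls p z / peval_fls q z"
proof -
  obtain p' q' where pq: "quot_of_fract (Fract p q) = (p', q')" by (cases "quot_of_fract (Fract p q)")
  have q0: "q' \<noteq> 0" using snd_quot_of_fract_nonzero[of "Fract p q"] pq by simp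
  have "Fract p' q' = Fract p q" using Fract_quot_of_fract[of "Fract p q"] pq by simp
  then have "p' * q = p * q'" using q0 assms by (simp add: eq_fract)
  then have "peval_fls p' z * peval_fls q z = peval_fls p z * peval_fls q' z" by (metis peval_mult)
  then show ?thesis using pq q0 assms by (simp add: reval_fls_def field_simps)
qed

lemma reval_add: "reval_fls (x + y) z = reval_fls x z + reval_fls y z"
  by (cases x; cases y) (simp add: reval_Fract field_simps)
lemma reval_mult: "reval_fls (x * y) z = reval_fls x z * reval_fls y z"
  by (cases x; cases y) (simp add: reval_Fract field_simps)
lemma reval_minus: "reval_fls (- x) z = - reval_fls x z"
  by (cases x) (simp add: reval_Fract field_simps)
lemma reval_diff: "reval_fls (x - y) z = reval_fls x z - reval_fls y z"
  by (cases x; cases y) (simp add: reval_Fract field_simps)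
lemma reval_0[simp]: "reval_fls 0 z = 0" by (simp add: reval_fls_def)
lemma reval_sum: "reval_fls (\<Sum>i\<in>A. f i) z = (\<Sum>i\<in>A. reval_fls (f i) z)"
  by (induction A rule: infinite_finite_induct) (auto simp: reval_add)
lemma reval_rshift: "reval_fls (rshift x) z = reval_fls x (z + 1)"
  by (cases x) (simp add: rshift_Fract reval_Fract peval_pshift)

lemma nu_reval_loc: assumes "x \<in> loc_ring a" shows "nu_q (reval_fls x a) \<ge> 0"
proof -
  obtain p q where pq: "x = Fract p q" "pev q a \<noteq> 0" "q \<noteq> 0" using assms by (metis loc_ex)
  show ?thesis
  proof (cases "p = 0")
    case True then show ?thesis using pq by (simp add: reval_Fract nu_q_def)
  next
    case False
    then show ?thesis using pq
      by (simp add: reval_Fract nu_q_def fls_divide_subdegree peval_subdeg_0 peval_subdeg_ge0)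
  qed
qed

lemma nu_mult: "nu_q (x * y) = nu_q x + nu_q (y :: 'a::field fls)"
  by (cases "x = 0"; cases "y = 0") (auto simp: nu_q_def)

lemma nu_add: "min (nu_q x) (nu_q y) \<le> nu_q (x + (y :: 'a::field fls))"
proof (cases "x + y = 0")
  case True then show ?thesis by (simp add: nu_q_def)
next
  case False
  then show ?thesis
  proof (cases "x = 0 \<or> y = 0")
    case True then show ?thesis by (auto simp: nu_q_def)
  next
    case F: False
    then show ?thesis using fls_plus_subdegree[OF False] by (auto simp: nu_q_def min_def)
  qed
qed

lemma nu_minus[simp]: "nu_q (- x) = nu_q (x :: 'a::field fls)"
  by (simp add: nu_q_def)

lemma nu_div: "y \<noteq> 0 \<Longrightarrow> nu_q (x / y) = nu_q x - nu_q (y :: 'a::field fls)"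
  by (cases "x = 0") (auto simp: nu_q_def fls_divide_subdegree)

lemma nu_sum_ge: "(\<And>i. i \<in> A \<Longrightarrow> m \<le> nu_q (f i)) \<Longrightarrow> m \<le> nu_q (\<Sum>i\<in>A. (f i :: 'a::field fls))"
proof (induction A rule: infinite_finite_induct)
  case (infinite A) then show ?case by (simp add: nu_q_def)
next
  case empty then show ?case by (simp add: nu_q_def)
next
  case (insert x F)
  then have "m \<le> min (nu_q (f x)) (nu_q (sum f F))" by simp
  also have "\<dots> \<le> nu_q (f x + sum f F)" by (rule nu_add)
  finally show ?case using insert by simp
qed

lemma nu_sum_gt: "m < \<infinity> \<Longrightarrow> (\<And>i. i \<in> A \<Longrightarrow> m < nu_q (f i)) \<Longrightarrow> m < nu_q (\<Sum>i\<in>A. (f i :: 'a::field fls))"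
proof (induction A rule: infinite_finite_induct)
  case (infinite A) then show ?case by (simp add: nu_q_def)
next
  case empty then show ?case by (simp add: nu_q_def)
next
  case (insert x F)
  then have "m < min (nu_q (f x)) (nu_q (sum f F))" by simp
  also have "\<dots> \<le> nu_q (f x + sum f F)" by (rule nu_add)
  finally show ?case using insert by simp
qed

lemma nu_ge_mult_loc: assumes "x \<in> loc_ring a" shows "nu_q y \<le> nu_q (reval_fls x a * y)"
proof -
  have "0 \<le> nu_q (reval_fls x a)" using nu_reval_loc[OF assms] .
  then show ?thesis by (simp add: nu_mult add_increasing)
qed

lemma act_lincomb: "act_at r (lincomb r a W) z b = (\<Sum>i<r. reval_fls (a i) z * act_at r (W i) z b)"
proof -
  have "act_at r (lincomb r a W) z b = (\<Sum>j<r. \<Sum>i<r. reval_fls (a i) z * reval_fls (W i j) z * b (int j))"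
    by (simp add: act_at_def lincomb_def reval_sum reval_mult sum_distrib_right)
  also have "\<dots> = (\<Sum>i<r. \<Sum>j<r. reval_fls (a i) z * (reval_fls (W i j) z * b (int j)))"
    by (subst sum.swap) (simp add: mult.assoc)
  also have "\<dots> = (\<Sum>i<r. reval_fls (a i) z * act_at r (W i) z b)"
    by (simp add: act_at_def sum_distrib_left)
  finally show ?thesis .
qed

lemma integral_lincomb:
  assumes "\<And>i. i < r \<Longrightarrow> integral_at ell r z (W i)" "\<And>i. i < r \<Longrightarrow> a i \<in> loc_ring z"
  shows "integral_at ell r z (lincomb r a W)"
  unfolding integral_at_def
proof
  fix b assume b: "b \<in> Sol ell r z"
  show "liminf (\<lambda>n. nu_q (b (- int n))) \<le> nu_q (act_at r (lincomb r a W) z b)"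
    unfolding act_lincomb
  proof (rule nu_sum_ge)
    fix i assume "i \<in> {..<r}"
    then have "liminf (\<lambda>n. nu_q (b (- int n))) \<le> nu_q (act_at r (W i) z b)"
      using assms(1)[of i] b by (auto simp: integral_at_def)
    also have "\<dots> \<le> nu_q (reval_fls (a i) z * act_at r (W i) z b)"
      using assms(2) \<open>i \<in> {..<r}\<close> by (intro nu_ge_mult_loc) auto
    finally show "liminf (\<lambda>n. nu_q (b (- int n))) \<le> nu_q (reval_fls (a i) z * act_at r (W i) z b)" .
  qed
qed

lemma liminf_Suc_ge: "liminf Y \<le> liminf (\<lambda>n. Y (Suc n) :: ereal)"
  unfolding liminf_SUP_INF
proof (rule SUP_mono)
  fix n show "\<exists>m\<in>UNIV. (INF k\<in>{n..}. Y k) \<le> (INF k\<in>{m..}. Y (Suc k))"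
    by (intro bexI[of _ n] INF_greatest) (auto intro: INF_lower)
qed

lemma integral_shift:
  fixes ell :: "nat \<Rightarrow> 'a::field_gcd poly"
  assumes r: "r = Suc m" and lr: "ell r \<noteq> 0" and I: "integral_at ell r z (shiftA ell r f)"
  shows "integral_at ell r (z + 1) f"
  unfolding integral_at_def
proof
  fix b assume b: "b \<in> Sol ell r (z + 1)"
  define b' where "b' k = b (k - 1)" for k
  have b'S: "b' \<in> Sol ell r z"
    unfolding Sol_def
  proof (intro CollectI allI)
    fix n :: int
    have "(\<Sum>i\<le>r. peval_fls (ell i) ((z + 1) + of_int (n - 1)) * b ((n - 1) + int i)) = 0"
      using b unfolding Sol_def by blast
    moreover have "(z + 1) + of_int (n - 1) = z + of_int n" by simp
    moreover have "\<And>i. b ((n - 1) + int i) = b' (n + int i)" by (simp add: b'_def algebra_simps)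
    ultimately show "(\<Sum>i\<le>r. peval_fls (ell i) (z + of_int n) * b' (n + int i)) = 0" by simp
  qed
  have sol0: "(\<Sum>i\<le>r. peval_fls (ell i) z * b' (int i)) = 0"
  proof -
    have "(\<Sum>i\<le>r. peval_fls (ell i) (z + of_int 0) * b' (0 + int i)) = 0"
      using b'S unfolding Sol_def by blast
    then show ?thesis by simp
  qed
  define R where "R i = reval_fls (f i) (z + 1)" for i
  define P where "P i = peval_fls (ell i) z" for i
  have Pr: "P r \<noteq> 0" using lr by (simp add: P_def)
  have sol0': "(\<Sum>j<Suc m. P j * b' (int j)) = - (P r * b' (int r))"
  proof -
    have "(\<Sum>i\<le>r. peval_fls (ell i) z * b' (int i)) = (\<Sum>j<Suc m. P j * b' (int j)) + P r * b' (int r)"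
      unfolding r atMost_Suc lessThan_Suc_atMost P_def by (simp add: add.commute)
    then show ?thesis using sol0 by (simp add: eq_neg_iff_add_eq_0)
  qed
  have sh: "reval_fls (shiftA ell r f j) z = (if j = 0 then 0 else R (j - 1)) - R m * (P j / P r)" if "j < r" for j
    using that r lr by (simp add: shiftA_def reval_diff reval_mult reval_rshift reval_Fract R_def P_def)
  have "act_at r (shiftA ell r f) z b' = (\<Sum>j<Suc m. ((if j = 0 then 0 else R (j - 1)) - R m * (P j / P r)) * b' (int j))"
    unfolding act_at_def using sh r by (intro sum.cong) auto
  also have "\<dots> = (\<Sum>j<Suc m. (if j = 0 then 0 else R (j - 1)) * b' (int j)) - (R m / P r) * (\<Sum>j<Suc m. P j * b' (int j))"
    by (simp add: algebra_simps sum_subtractf sum_distrib_left)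
  also have "\<dots> = (\<Sum>j<Suc m. (if j = 0 then 0 else R (j - 1)) * b' (int j)) + R m * b' (int r)"
    using Pr by (simp only: sol0') (simp add: field_simps)
  also have "(\<Sum>j<Suc m. (if j = 0 then 0 else R (j - 1)) * b' (int j)) = (\<Sum>i<m. R i * b (int i))"
    by (subst sum.lessThan_Suc_shift) (simp add: b'_def)
  also have "R m * b' (int r) = R m * b (int m)" by (simp add: b'_def r)
  also have "(\<Sum>i<m. R i * b (int i)) + R m * b (int m) = act_at r f (z + 1) b"
    by (simp add: act_at_def R_def r)
  finally have act: "act_at r (shiftA ell r f) z b' = act_at r f (z + 1) b" .
  have "liminf (\<lambda>n. nu_q (b (- int n))) \<le> liminf (\<lambda>n. nu_q (b (- int (Suc n))))"
    by (rule liminf_Suc_ge)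
  also have "(\<lambda>n. nu_q (b (- int (Suc n)))) = (\<lambda>n. nu_q (b' (- int n)))"
  proof
    fix n have e: "- int (Suc n) = - int n - 1" by simp
    show "nu_q (b (- int (Suc n))) = nu_q (b' (- int n))" unfolding e b'_def ..
  qed
  also have "liminf \<dots> \<le> nu_q (act_at r (shiftA ell r f) z b')"
    using I b'S by (auto simp: integral_at_def)
  finally show "liminf (\<lambda>n. nu_q (b (- int n))) \<le> nu_q (act_at r f (z + 1) b)" using act by simp
qed

lemma nu_peval_ge0: "0 \<le> nu_q (peval_fls p z)"
  by (cases "p = 0") (auto simp: nu_q_def peval_subdeg_ge0)

lemma nu_peval_mult_ge: "nu_q y \<le> nu_q (peval_fls p z * y)"
  using nu_peval_ge0[of p z] by (simp add: nu_mult add_increasing)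

lemma std_integral:
  fixes ell :: "nat \<Rightarrow> 'a::field_gcd poly"
  assumes r: "0 < r" and nz: "\<And>k::int. k < 0 \<Longrightarrow> pev (ell r) (z + of_int k) \<noteq> 0"
    and loc: "\<And>i. i < r \<Longrightarrow> f i \<in> loc_ring z"
  shows "integral_at ell r z f"
  unfolding integral_at_def
proof
  fix b assume b: "b \<in> Sol ell r z"
  have solk: "(\<Sum>i\<le>r. peval_fls (ell i) (z + of_int k) * b (k + int i)) = 0" for k
    using b unfolding Sol_def by blast
  define V where "V = (\<lambda>i. nu_q (b (int i))) ` {..<r}"
  have "finite V" "V \<noteq> {}" using r by (auto simp: V_def)
  define mv where "mv = Min V"
  have mvle: "mv \<le> nu_q (b (int i))" if "i < r" for i
    using that \<open>finite V\<close> by (auto simp: mv_def V_def)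
  obtain i0 where i0: "i0 < r" "mv = nu_q (b (int i0))"
    using Min_in[OF \<open>finite V\<close> \<open>V \<noteq> {}\<close>] by (auto simp: mv_def V_def)
  have act: "mv \<le> nu_q (act_at r f z b)"
    unfolding act_at_def
  proof (rule nu_sum_ge)
    fix i assume "i \<in> {..<r}"
    then show "mv \<le> nu_q (reval_fls (f i) z * b (int i))"
      using mvle[of i] nu_ge_mult_loc[OF loc[of i], of "b (int i)"] by auto
  qed
  have lim: "liminf (\<lambda>n. nu_q (b (- int n))) \<le> mv"
  proof (cases "mv = \<infinity>")
    case True then show ?thesis by simp
  next
    case fin: False
    have C: "\<exists>i<r. nu_q (b (- int n + int i)) \<le> mv" for n
    proof (induction n)
      case 0 then show ?case using i0 by auto
    next
      case (Suc n)
      show ?case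
      proof (rule ccontr)
        assume "\<not> ?case"
        then have gt: "\<And>i. i < r \<Longrightarrow> mv < nu_q (b (- int (Suc n) + int i))" by (auto simp: not_le)
        define k where "k = - int (Suc n)"
        have "(\<Sum>i\<le>r. peval_fls (ell i) (z + of_int k) * b (k + int i)) = 0" by (rule solk)
        moreover have "{..r} = insert r {..<r}" by auto
        ultimately have eq: "peval_fls (ell r) (z + of_int k) * b (k + int r) = - (\<Sum>i<r. peval_fls (ell i) (z + of_int k) * b (k + int i))"
          by (simp add: eq_neg_iff_add_eq_0)
        have "mv < nu_q (\<Sum>i<r. peval_fls (ell i) (z + of_int k) * b (k + int i))"
        proof (rule nu_sum_gt)
          show "mv < \<infinity>" using fin by (simp add: less_le)
          fix i assume "i \<in> {..<r}"
          then have "mv < nu_q (b (k + int i))" using gt[of i] by (simp add: k_def)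
          also have "\<dots> \<le> nu_q (peval_fls (ell i) (z + of_int k) * b (k + int i))" by (rule nu_peval_mult_ge)
          finally show "mv < nu_q (peval_fls (ell i) (z + of_int k) * b (k + int i))" .
        qed
        also have "\<dots> = nu_q (peval_fls (ell r) (z + of_int k) * b (k + int r))"
          using eq by simp
        also have "\<dots> = nu_q (b (k + int r))"
        proof -
          have "pev (ell r) (z + of_int k) \<noteq> 0" using nz[of k] by (simp add: k_def)
          then have "ell r \<noteq> 0" by auto
          then have "nu_q (peval_fls (ell r) (z + of_int k)) = 0"
            using peval_subdeg_0[OF \<open>pev (ell r) (z + of_int k) \<noteq> 0\<close>] by (simp add: nu_q_def)
          then show ?thesis by (simp add: nu_mult)
        qed
        finally have top: "mv < nu_q (b (k + int r))" .
        have all: "mv < nu_q (b (- int n + int i))" if "i < r" for i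
        proof (cases "Suc i < r")
          case True
          then show ?thesis using gt[of "Suc i"] by (simp add: algebra_simps)
        next
          case False
          then have "i = r - 1" using that by auto
          then have "- int n + int i = k + int r" using r by (simp add: k_def)
          then show ?thesis using top by simp
        qed
        then show False using Suc.IH by (auto simp: not_le[symmetric])
      qed
    qed
    show ?thesis unfolding liminf_SUP_INF
    proof (rule SUP_least)
      fix N
      obtain i where i: "i < r" "nu_q (b (- int (N + r) + int i)) \<le> mv" using C by blast
      define k where "k = N + r - i"
      have "k \<ge> N" using i by (simp add: k_def)
      have "- int k = - int (N + r) + int i" using i by (simp add: k_def)
      then have "nu_q (b (- int k)) \<le> mv" using i by simp
      then show "(INF m\<in>{N..}. nu_q (b (- int m))) \<le> mv"
        using \<open>k \<ge> N\<close> by (intro INF_lower2[of k]) auto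
    qed
  qed
  show "liminf (\<lambda>n. nu_q (b (- int n))) \<le> nu_q (act_at r f z b)" using lim act by simp
qed

definition stdg :: "nat \<Rightarrow> (nat \<Rightarrow> 'a::field_gcd poly fract) \<Rightarrow> 'a alg_closure \<Rightarrow> bool" where
  "stdg r f z \<longleftrightarrow> (\<forall>i<r. f i \<in> loc_ring z)"

definition good :: "nat \<Rightarrow> (nat \<Rightarrow> nat \<Rightarrow> 'a::field_gcd poly fract) \<Rightarrow> (nat \<Rightarrow> 'a poly fract) \<Rightarrow> 'a alg_closure \<Rightarrow> bool" where
  "good r W f z \<longleftrightarrow> (\<exists>a. (\<forall>i<r. a i \<in> loc_ring z) \<and> f = lincomb r a W)"

lemma lincomb_diff: "lincomb r (\<lambda>i. a i - a' i) W = (\<lambda>j. lincomb r a W j - lincomb r a' W j)"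
  by (simp add: lincomb_def fun_eq_iff algebra_simps sum_subtractf)
lemma lincomb_add: "lincomb r (\<lambda>i. a i + a' i) W = (\<lambda>j. lincomb r a W j + lincomb r a' W j)"
  by (simp add: lincomb_def fun_eq_iff algebra_simps sum.distrib)

lemma good_diff: assumes "good r W f z" "good r W f' z" shows "good r W (\<lambda>j. f j - f' j) z"
proof -
  obtain a a' where "\<forall>i<r. a i \<in> loc_ring z" "f = lincomb r a W" "\<forall>i<r. a' i \<in> loc_ring z" "f' = lincomb r a' W"
    using assms by (auto simp: good_def)
  then show ?thesis unfolding good_def
    by (intro exI[of _ "\<lambda>i. a i - a' i"]) (simp add: lincomb_diff loc_diff)
qed

lemma good_add: assumes "good r W f z" "good r W f' z" shows "good r W (\<lambda>j. f j + f' j) z"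
proof -
  obtain a a' where "\<forall>i<r. a i \<in> loc_ring z" "f = lincomb r a W" "\<forall>i<r. a' i \<in> loc_ring z" "f' = lincomb r a' W"
    using assms by (auto simp: good_def)
  then show ?thesis unfolding good_def
    by (intro exI[of _ "\<lambda>i. a i + a' i"]) (simp add: lincomb_add loc_add)
qed

lemma good_coords:
  assumes B: "is_basis_A r W" and g: "good r W (lincomb r a W) z" and i: "i < r"
  shows "a i \<in> loc_ring z"
proof -
  obtain a' where a': "\<forall>i<r. a' i \<in> loc_ring z" "lincomb r a W = lincomb r a' W"
    using g by (auto simp: good_def)
  have "lincomb r (\<lambda>i. a i - a' i) W = (\<lambda>_. 0)" using a'(2) by (simp add: lincomb_diff)
  then have "a i - a' i = 0" using B i by (auto simp: is_basis_A_def)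
  then show ?thesis using a'(1) i by simp
qed

lemma good_iff_coords:
  assumes "is_basis_A r W" shows "good r W (lincomb r a W) z \<longleftrightarrow> (\<forall>i<r. a i \<in> loc_ring z)"
  using good_coords[OF assms] by (auto simp: good_def)

lemma loc_inv_mult: assumes "pev q z \<noteq> 0" "x \<in> loc_ring z" shows "x * Fract p q \<in> loc_ring z"
  using assms by (intro loc_mult loc_Fract)

lemma S1:
  fixes ell :: "nat \<Rightarrow> 'a::field_gcd poly"
  assumes r: "0 < r" and lr: "pev (ell r) z \<noteq> 0" and f: "stdg r f (z + 1)"
  shows "stdg r (shiftA ell r f) z"
  unfolding stdg_def
proof (intro allI impI)
  fix j assume j: "j < r"
  have a: "rshift (f i) \<in> loc_ring z" if "i < r" for i
    using f that by (simp add: stdg_def loc_rshift)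
  have b: "(if j = 0 then 0 else rshift (f (j - 1))) \<in> loc_ring z" using a j by auto
  have c: "rshift (f (r - 1)) * Fract (ell j) (ell r) \<in> loc_ring z"
    using a[of "r - 1"] r lr by (intro loc_inv_mult) auto
  show "shiftA ell r f j \<in> loc_ring z"
    using b c j by (simp add: shiftA_def loc_diff)
qed

lemma S2:
  fixes ell :: "nat \<Rightarrow> 'a::field_gcd poly"
  assumes r: "0 < r" and l0: "pev (ell 0) z \<noteq> 0" and lr: "ell r \<noteq> 0"
    and F: "stdg r (shiftA ell r f) z"
  shows "stdg r f (z + 1)"
proof -
  define F where "F = shiftA ell r f"
  have l00: "ell 0 \<noteq> 0" using l0 by auto
  have F0: "F 0 = - (rshift (f (r - 1)) * Fract (ell 0) (ell r))" using r by (simp add: F_def shiftA_def)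
  have one: "Fract (ell 0) (ell r) * Fract (ell r) (ell 0) = 1"
    using l00 lr by (simp add: eq_fract One_fract_def)
  have key: "rshift (f (r - 1)) = - (F 0 * Fract (ell r) (ell 0))"
  proof -
    have "F 0 * Fract (ell r) (ell 0) = - (rshift (f (r - 1)) * (Fract (ell 0) (ell r) * Fract (ell r) (ell 0)))"
      by (simp add: F0 mult.assoc)
    then show ?thesis using one by simp
  qed
  have Floc: "F j \<in> loc_ring z" if "j < r" for j using F that by (simp add: stdg_def F_def)
  have rl: "rshift (f (r - 1)) \<in> loc_ring z"
    unfolding key using Floc[of 0] r l0 by (intro loc_uminus loc_inv_mult) auto
  have rj: "rshift (f (j - 1)) \<in> loc_ring z" if "0 < j" "j < r" for j
  proof -
    have Fj: "F j = rshift (f (j - 1)) - rshift (f (r - 1)) * Fract (ell j) (ell r)"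
      using that by (simp add: F_def shiftA_def)
    have "rshift (f (r - 1)) * Fract (ell j) (ell r) = - (F 0 * (Fract (ell r) (ell 0) * Fract (ell j) (ell r)))"
      by (subst key) (simp del: mult_fract add: mult.assoc)
    also have "Fract (ell r) (ell 0) * Fract (ell j) (ell r) = Fract (ell j) (ell 0)"
      using l00 lr by (simp add: eq_fract)
    finally have "rshift (f (j - 1)) = F j - F 0 * Fract (ell j) (ell 0)" using Fj by simp
    then show ?thesis using Floc[of j] Floc[of 0] that l0
      by (auto intro!: loc_diff loc_inv_mult)
  qed
  show ?thesis unfolding stdg_def
  proof (intro allI impI)
    fix i assume i: "i < r"
    have "rshift (f i) \<in> loc_ring z"
    proof (cases "i = r - 1")
      case True then show ?thesis using rl by simp
    next
      case False
      then show ?thesis using rj[of "Suc i"] i by simp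
    qed
    then show "f i \<in> loc_ring (z + 1)" by (simp add: loc_rshift)
  qed
qed

lemma rshift_sum: "rshift (\<Sum>i\<in>A. f i) = (\<Sum>i\<in>A. rshift (f i))"
  by (induction A rule: infinite_finite_induct) (auto simp: rshift_add)

lemma shiftA_lincomb:
  "shiftA ell r (lincomb r a W) = (\<lambda>j. \<Sum>i<r. rshift (a i) * shiftA ell r (W i) j)"
proof
  fix j
  show "shiftA ell r (lincomb r a W) j = (\<Sum>i<r. rshift (a i) * shiftA ell r (W i) j)"
    by (cases "j = 0") (simp_all add: shiftA_def lincomb_def rshift_sum rshift_mult
        sum_distrib_right sum_subtractf sum_negf mult.assoc right_diff_distrib)
qed

lemma of_int_eq0_ac: "(of_int k :: 'a::field_char_0 alg_closure) = 0 \<longleftrightarrow> k = 0"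
  by simp

lemma orbit_eq: "(b :: 'a::field_char_0 alg_closure) + of_int k = b \<longleftrightarrow> k = 0"
  by simp


lemma orb_le_int: "orb_le a (b :: 'a::field_char_0 alg_closure) \<longleftrightarrow> (\<exists>n::int. 0 \<le> n \<and> b = a + of_int n)"
  unfolding orb_le_def
proof
  assume "\<exists>n::nat. b = a + of_nat n" then show "\<exists>n::int. 0 \<le> n \<and> b = a + of_int n"
    by (metis of_int_of_nat_eq of_nat_0_le_iff)
next
  assume "\<exists>n::int. 0 \<le> n \<and> b = a + of_int n" then show "\<exists>n::nat. b = a + of_nat n"
    by (metis of_int_of_nat_eq nonneg_int_cases)
qed

lemma orb_lt_int: "orb_lt a (b :: 'a::field_char_0 alg_closure) \<longleftrightarrow> (\<exists>n::int. 0 < n \<and> b = a + of_int n)"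
  unfolding orb_lt_def
proof
  assume "\<exists>n::nat. 0 < n \<and> b = a + of_nat n" then show "\<exists>n::int. 0 < n \<and> b = a + of_int n"
    by (metis of_int_of_nat_eq of_nat_0_less_iff)
next
  assume "\<exists>n::int. 0 < n \<and> b = a + of_int n" then show "\<exists>n::nat. 0 < n \<and> b = a + of_nat n"
    by (metis of_int_of_nat_eq pos_int_cases of_nat_0_less_iff)
qed

lemma shift_shift: "(x :: 'a::field_char_0 alg_closure) + of_int k + of_int l = x + of_int (k + l)"
  by simp

lemma shift_self: "(x :: 'a::field_char_0 alg_closure) = x + of_int k \<longleftrightarrow> k = 0"
  by (metis add_cancel_left_right of_int_eq_0_iff)

context
  fixes ell :: "nat \<Rightarrow> 'a::{field_char_0, field_gcd} poly" and r :: nat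
    and B :: "'a alg_closure set" and W :: "nat \<Rightarrow> nat \<Rightarrow> 'a poly fract"
    and e :: "'a poly" and M :: "nat \<Rightarrow> nat \<Rightarrow> 'a poly"
    and c :: "nat \<Rightarrow> 'a poly" and u :: "'a poly"
  assumes A0: "ell 0 \<noteq> 0" and Ar: "ell r \<noteq> 0"
    and SB: "suitable_basis ell r B W"
    and SF: "shift_free (map_poly to_ac u * (\<Prod>\<beta>\<in>B. [:- \<beta>, 1:]))"
begin

lemma basis: "is_basis_A r W" using SB by (simp add: suitable_basis_def)
lemma adm: "admissible_betas ell r B" using SB by (simp add: suitable_basis_def)

lemma roots_eq: "roots_l0lr ell r = {z. poly (map_poly to_ac (ell 0 * ell r)) z = 0}"
  by (simp add: roots_l0lr_def)

lemma finite_roots: "finite (roots_l0lr ell r)"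
  unfolding roots_eq using A0 Ar by (intro poly_roots_finite) (simp add: mp_eq0)

lemma finite_B: "finite B"
proof -
  have "\<forall>\<beta>\<in>B. \<exists>\<rho>\<in>roots_l0lr ell r. same_orbit \<rho> \<beta>" using adm by (simp add: admissible_betas_def)
  then obtain f where f: "\<And>\<beta>. \<beta> \<in> B \<Longrightarrow> f \<beta> \<in> roots_l0lr ell r \<and> same_orbit (f \<beta>) \<beta>" by metis
  have uniq: "\<And>\<rho>. \<rho> \<in> roots_l0lr ell r \<Longrightarrow> \<exists>!\<beta>. \<beta> \<in> B \<and> same_orbit \<rho> \<beta>"
    using adm by (simp add: admissible_betas_def)
  have "inj_on f B"
  proof
    fix x y assume "x \<in> B" "y \<in> B" "f x = f y"
    then show "x = y" using f[of x] f[of y] uniq[of "f x"] by metis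
  qed
  moreover have "f ` B \<subseteq> roots_l0lr ell r" using f by auto
  ultimately show ?thesis using finite_roots by (metis finite_imageD finite_subset)
qed

abbreviation "PP \<equiv> map_poly to_ac u * (\<Prod>\<beta>\<in>B. [:- \<beta>, 1:])"

lemma PP_beta: "\<beta> \<in> B \<Longrightarrow> poly PP \<beta> = 0"
  using finite_B by (simp add: poly_prod prod_zero_iff)

lemma PP_u: "pev u z = 0 \<Longrightarrow> poly PP z = 0"
  by simp

lemma SF_contra: assumes "poly PP x = 0" "poly PP (x + of_int k) = 0" shows "k = 0"
proof (rule ccontr)
  assume k: "k \<noteq> 0"
  then have g: "gcd PP (pshift_int k PP) = 1" using SF by (simp add: shift_free_def)
  have "poly (pshift_int k PP) x = 0" using assms(2) by (simp add: pshift_int_def poly_pcompose add.commute)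
  then have "[:- x, 1:] dvd pshift_int k PP" by (simp add: poly_eq_0_iff_dvd)
  moreover have "[:- x, 1:] dvd PP" using assms(1) poly_eq_0_iff_dvd by blast
  ultimately have "[:- x, 1:] dvd 1" using g by (metis gcd_greatest)
  then show False by (simp add: is_unit_poly_iff)
qed

lemma u_nz: "u \<noteq> 0"
proof
  assume "u = 0"
  then have "gcd PP (pshift_int 1 PP) = 0" by (simp add: pshift_int_def)
  moreover have "gcd PP (pshift_int 1 PP) = 1" using SF by (simp add: shift_free_def)
  ultimately show False by simp
qed

lemma inZ_good_integral: "z \<in> Zset ell r B \<Longrightarrow> good r W f z \<Longrightarrow> integral_at ell r z f"
  using SB unfolding good_def suitable_basis_def local_integral_basis_def
  by (auto intro!: integral_lincomb)

lemma inZ_integral_good: "z \<in> Zset ell r B \<Longrightarrow> f \<in> Avec r \<Longrightarrow> integral_at ell r z f \<Longrightarrow> good r W f z"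
  using SB unfolding good_def suitable_basis_def local_integral_basis_def by blast

lemma notZ_good: "z \<notin> Zset ell r B \<Longrightarrow> good r W f z \<longleftrightarrow> f \<in> Avec r \<and> stdg r f z"
  using SB unfolding good_def suitable_basis_def same_local_module_def stdg_def
  by (auto simp: set_eq_iff) (metis (mono_tags, lifting))+

lemma shiftA_Avec: "shiftA ell r f \<in> Avec r"
  by (simp add: Avec_def shiftA_def)


lemma clause1: "\<rho> \<in> roots_l0lr ell r \<Longrightarrow> \<exists>!\<beta>. \<beta> \<in> B \<and> same_orbit \<rho> \<beta>"
  using adm by (simp add: admissible_betas_def)
lemma clause3: "\<beta> \<in> B \<Longrightarrow> \<rho> \<in> roots_l0lr ell r \<Longrightarrow> same_orbit \<rho> \<beta> \<Longrightarrow> orb_le \<rho> \<beta>"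
  using adm by (simp add: admissible_betas_def)

lemma FA: assumes "\<beta> \<in> B" "1 \<le> k" shows "pev (ell 0 * ell r) (\<beta> + of_int k) \<noteq> 0"
proof
  assume "pev (ell 0 * ell r) (\<beta> + of_int k) = 0"
  then have R: "\<beta> + of_int k \<in> roots_l0lr ell r" by (simp add: roots_l0lr_def del: pev_mult)
  have "same_orbit (\<beta> + of_int k) \<beta>" unfolding same_orbit_def
    by (intro exI[of _ "- k"]) simp
  then have "orb_le (\<beta> + of_int k) \<beta>" using clause3[OF assms(1) R] by blast
  then obtain n::int where "0 \<le> n" "\<beta> = \<beta> + of_int k + of_int n" by (auto simp: orb_le_int)
  then have "k + n = 0" by (simp only: shift_shift shift_self)
  then show False using assms(2) \<open>0 \<le> n\<close> by simp
qed

lemma FB: assumes "\<beta> \<in> B" "1 \<le> k" shows "\<beta> + of_int k \<notin> Zset ell r B"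
proof
  assume "\<beta> + of_int k \<in> Zset ell r B"
  then obtain \<beta>' \<rho> where b': "\<beta>' \<in> B" "orb_le (\<beta> + of_int k) \<beta>'" and R: "\<rho> \<in> roots_l0lr ell r"
    "orb_lt \<rho> (\<beta> + of_int k)" by (auto simp: Zset_def)
  obtain n::int where n: "0 \<le> n" "\<beta>' = \<beta> + of_int k + of_int n" using b'(2) by (auto simp: orb_le_int)
  obtain m::int where m: "0 < m" "\<beta> + of_int k = \<rho> + of_int m" using R(2) by (auto simp: orb_lt_int)
  have "same_orbit \<rho> \<beta>" unfolding same_orbit_def using m(2)
    by (intro exI[of _ "m - k"]) (simp add: algebra_simps)
  moreover have "same_orbit \<rho> \<beta>'" unfolding same_orbit_def using m(2) n(2)
    by (intro exI[of _ "m + n"]) (simp add: algebra_simps)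
  ultimately have "\<beta>' = \<beta>" using clause1[OF R(1)] assms(1) b'(1) by blast
  then have "\<beta> = \<beta> + of_int (k + n)" using n(2) by (simp only: shift_shift)
  then have "k + n = 0" by (simp only: shift_self)
  then show False using assms(2) n(1) by simp
qed

lemma FC: assumes "\<beta> \<in> B" "k \<le> 0" "\<beta> + of_int k \<notin> Zset ell r B" "j < 0"
  shows "pev (ell 0 * ell r) (\<beta> + of_int k + of_int j) \<noteq> 0"
proof
  assume "pev (ell 0 * ell r) (\<beta> + of_int k + of_int j) = 0"
  then have R: "\<beta> + of_int k + of_int j \<in> roots_l0lr ell r" by (simp add: roots_l0lr_def del: pev_mult)
  have "orb_lt (\<beta> + of_int k + of_int j) (\<beta> + of_int k)" unfolding orb_lt_int
    using assms(4) by (intro exI[of _ "- j"]) simp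
  moreover have "orb_le (\<beta> + of_int k) \<beta>" unfolding orb_le_int
    using assms(2) by (intro exI[of _ "- k"]) simp
  ultimately have "\<beta> + of_int k \<in> Zset ell r B" using R assms(1) unfolding Zset_def by blast
  with assms(3) show False by simp
qed

lemma FD: assumes "\<beta> \<in> B" "k \<le> 0" "z \<in> Zset ell r B" "z + 1 = \<beta> + of_int k"
  shows "z + 1 \<in> Zset ell r B"
proof -
  obtain \<rho> where R: "\<rho> \<in> roots_l0lr ell r" "orb_lt \<rho> z" using assms(3) by (auto simp: Zset_def)
  obtain m::int where m: "0 < m" "z = \<rho> + of_int m" using R(2) by (auto simp: orb_lt_int)
  have "orb_lt \<rho> (z + 1)" unfolding orb_lt_int using m by (intro exI[of _ "m + 1"]) simp
  moreover have "orb_le (z + 1) \<beta>" unfolding orb_le_int using assms(2,4) by (intro exI[of _ "- k"]) simp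
  ultimately show ?thesis using R(1) assms(1) unfolding Zset_def by blast
qed

lemma rootless: assumes "\<forall>\<rho>\<in>roots_l0lr ell r. \<not> same_orbit \<rho> \<gamma>"
  shows "\<gamma> + of_int k \<notin> Zset ell r B" "pev (ell 0 * ell r) (\<gamma> + of_int k) \<noteq> 0"
proof
  assume "\<gamma> + of_int k \<in> Zset ell r B"
  then obtain \<rho> where R: "\<rho> \<in> roots_l0lr ell r" "orb_lt \<rho> (\<gamma> + of_int k)" by (auto simp: Zset_def)
  obtain m::int where m: "0 < m" "\<gamma> + of_int k = \<rho> + of_int m" using R(2) by (auto simp: orb_lt_int)
  have "same_orbit \<rho> \<gamma>" unfolding same_orbit_def using m(2)
    by (intro exI[of _ "m - k"]) (simp add: algebra_simps)
  then show False using assms R(1) by blast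
next
  show "pev (ell 0 * ell r) (\<gamma> + of_int k) \<noteq> 0"
  proof
    assume "pev (ell 0 * ell r) (\<gamma> + of_int k) = 0"
    then have R: "\<gamma> + of_int k \<in> roots_l0lr ell r" by (simp add: roots_l0lr_def del: pev_mult)
    have "same_orbit (\<gamma> + of_int k) \<gamma>" unfolding same_orbit_def by (intro exI[of _ "- k"]) simp
    then show False using assms R by blast
  qed
qed

context
  fixes g a
  assumes gA: "g \<in> Avec r" and hg: "lincomb r (\<lambda>i. Fract (c i) u) W = deltaA ell r g"
    and ga: "g = lincomb r a W" and r0: "0 < r"
begin

abbreviation "hh \<equiv> lincomb r (\<lambda>i. Fract (c i) u) W"
abbreviation "ZZ \<equiv> Zset ell r B"

lemma Sg_eq: "shiftA ell r g = (\<lambda>j. hh j + g j)"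
  using hg by (simp add: deltaA_def fun_eq_iff)

lemma good_h: "pev u z \<noteq> 0 \<Longrightarrow> good r W hh z"
  unfolding good_def by (intro exI[of _ "\<lambda>i. Fract (c i) u"]) (auto intro: loc_Fract)

lemma badh1: assumes "\<not> good r W g z" "good r W (shiftA ell r g) z" shows "pev u z = 0"
proof (rule ccontr)
  assume "pev u z \<noteq> 0"
  then have "good r W hh z" by (rule good_h)
  then have "good r W (\<lambda>j. shiftA ell r g j - hh j) z" using assms(2) by (intro good_diff)
  moreover have "(\<lambda>j. shiftA ell r g j - hh j) = g" using Sg_eq by (simp add: fun_eq_iff)
  ultimately show False using assms(1) by simp
qed

lemma badh2: assumes "good r W g z" "\<not> good r W (shiftA ell r g) z" shows "pev u z = 0"
proof (rule ccontr)
  assume "pev u z \<noteq> 0"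
  then have "good r W hh z" by (rule good_h)
  then have "good r W (\<lambda>j. hh j + g j) z" using assms(1) by (intro good_add)
  then show False using assms(2) Sg_eq by simp
qed

lemma routeS2: assumes "z \<notin> ZZ" "z + 1 \<notin> ZZ" "pev (ell 0) z \<noteq> 0"
    "\<not> good r W g (z + 1)" "good r W g z" shows "pev u z = 0"
proof (rule badh2[OF assms(5)])
  show "\<not> good r W (shiftA ell r g) z"
  proof
    assume "good r W (shiftA ell r g) z"
    then have "stdg r (shiftA ell r g) z" using notZ_good assms(1) by blast
    then have "stdg r g (z + 1)" using S2 r0 assms(3) Ar by blast
    then have "good r W g (z + 1)" using notZ_good assms(2) gA by blast
    with assms(4) show False by simp
  qed
qed

lemma routeS1: assumes "z \<notin> ZZ" "z + 1 \<notin> ZZ" "pev (ell r) z \<noteq> 0"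
    "\<not> good r W g z" "good r W g (z + 1)" shows "pev u z = 0"
proof (rule badh1[OF assms(4)])
  have "stdg r g (z + 1)" using notZ_good assms(2) assms(5) by blast
  then have "stdg r (shiftA ell r g) z" using S1 r0 assms(3) by blast
  then show "good r W (shiftA ell r g) z" using notZ_good assms(1) shiftA_Avec by blast
qed

lemma routeI: assumes "z + 1 \<in> ZZ" "z \<in> ZZ \<or> (\<forall>j::int. j < 0 \<longrightarrow> pev (ell r) (z + of_int j) \<noteq> 0)"
    "\<not> good r W g (z + 1)" "good r W g z" shows "pev u z = 0"
proof (rule badh2[OF assms(4)])
  show "\<not> good r W (shiftA ell r g) z"
  proof
    assume G: "good r W (shiftA ell r g) z"
    have "integral_at ell r z (shiftA ell r g)"
    proof (cases "z \<in> ZZ")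
      case True then show ?thesis using G inZ_good_integral by blast
    next
      case False
      then have nz: "\<And>j::int. j < 0 \<Longrightarrow> pev (ell r) (z + of_int j) \<noteq> 0" using assms(2) by blast
      have "stdg r (shiftA ell r g) z" using notZ_good False G by blast
      then show ?thesis using r0 nz by (intro std_integral) (auto simp: stdg_def)
    qed
    then have "integral_at ell r (z + 1) g" using r0 Ar by (intro integral_shift[of r "r - 1"]) auto
    then have "good r W g (z + 1)" using inZ_integral_good assms(1) gA by blast
    with assms(3) show False by simp
  qed
qed

lemma bad_finite: "finite {z. \<not> good r W g z}"
proof -
  have "{z. \<not> good r W g z} \<subseteq> (\<Union>i<r. {z. poly (map_poly to_ac (snd (quot_of_fract (a i)))) z = 0})"
    using good_iff_coords[OF basis, of a] ga loc_iff by auto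
  moreover have "finite (\<Union>i<r. {z. poly (map_poly to_ac (snd (quot_of_fract (a i)))) z = 0})"
    by (intro finite_UN_I) (auto intro!: poly_roots_finite simp: mp_eq0)
  ultimately show ?thesis by (rule finite_subset)
qed

lemma all_good: "good r W g z0"
proof (rule ccontr)
  assume bad0: "\<not> good r W g z0"
  define \<gamma> where "\<gamma> = z0"
  define N where "N = {n::int. \<not> good r W g (\<gamma> + of_int n)}"
  have "N = (\<lambda>n. \<gamma> + of_int n) -` {z. \<not> good r W g z}" by (auto simp: N_def)
  moreover have "inj (\<lambda>n::int. \<gamma> + of_int n)" by (auto simp: inj_on_def)
  ultimately have finN: "finite N" using finite_vimageI[OF bad_finite] by metis
  have "0 \<in> N" using bad0 by (simp add: N_def \<gamma>_def)
  then have NE: "N \<noteq> {}" by auto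
  define n0 where "n0 = Min N"
  define n1 where "n1 = Max N"
  have n0N: "n0 \<in> N" using finN NE by (simp add: n0_def)
  have n1N: "n1 \<in> N" using finN NE by (simp add: n1_def)
  have n01: "n0 \<le> n1" using finN n0N by (simp add: n1_def)
  have "n0 - 1 \<notin> N"
  proof
    assume "n0 - 1 \<in> N" then have "n0 \<le> n0 - 1" unfolding n0_def using finN by (rule Min_le[rotated])
    then show False by simp
  qed
  have "n1 + 1 \<notin> N"
  proof
    assume "n1 + 1 \<in> N" then have "n1 + 1 \<le> n1" unfolding n1_def using finN by (rule Max_ge[rotated])
    then show False by simp
  qed
  define \<alpha> where "\<alpha> = \<gamma> + of_int (n0 - 1)"
  define \<delta> where "\<delta> = \<gamma> + of_int n1"
  have a1: "\<alpha> + 1 = \<gamma> + of_int n0" by (simp add: \<alpha>_def)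
  have d1: "\<delta> + 1 = \<gamma> + of_int (n1 + 1)" by (simp add: \<delta>_def)
  have ga0: "good r W g \<alpha>" using \<open>n0 - 1 \<notin> N\<close> by (simp add: N_def \<alpha>_def)
  have ga1: "\<not> good r W g (\<alpha> + 1)" using n0N by (simp add: N_def a1)
  have gd0: "\<not> good r W g \<delta>" using n1N by (simp add: N_def \<delta>_def)
  have gd1: "good r W g (\<delta> + 1)" using \<open>n1 + 1 \<notin> N\<close> by (simp add: N_def d1)
  show False
  proof (cases "\<exists>\<rho>\<in>roots_l0lr ell r. same_orbit \<rho> \<gamma>")
    case True
    then obtain \<rho> where R: "\<rho> \<in> roots_l0lr ell r" "same_orbit \<rho> \<gamma>" by blast
    obtain \<beta> where \<beta>: "\<beta> \<in> B" "same_orbit \<rho> \<beta>" using clause1[OF R(1)] by blast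
    obtain s1 where s1: "\<gamma> = \<rho> + of_int s1" using R(2) by (auto simp: same_orbit_def)
    obtain s2 where s2: "\<beta> = \<rho> + of_int s2" using \<beta>(2) by (auto simp: same_orbit_def)
    define t where "t = s1 - s2"
    have gt: "\<gamma> = \<beta> + of_int t" using s1 s2 by (simp add: t_def algebra_simps)
    define k where "k = t + n0 - 1"
    have ak: "\<alpha> = \<beta> + of_int k" using gt by (simp add: \<alpha>_def k_def algebra_simps)
    have ak1: "\<alpha> + 1 = \<beta> + of_int (k + 1)" using ak by simp
    have contra: "k = 0" if "pev u \<alpha> = 0"
    proof -
      have "poly PP \<beta> = 0" using PP_beta[OF \<beta>(1)] .
      moreover have "poly PP (\<beta> + of_int k) = 0" using that ak by simp
      ultimately show ?thesis by (rule SF_contra)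
    qed
    consider "1 \<le> k" | "k = 0" | "k \<le> -1" by linarith
    then show False
    proof cases
      case 1
      have "\<alpha> \<notin> ZZ" using FB[OF \<beta>(1) 1] ak by simp
      moreover have "\<alpha> + 1 \<notin> ZZ" unfolding ak1 using 1 by (intro FB[OF \<beta>(1)]) simp
      moreover have "pev (ell 0) \<alpha> \<noteq> 0" using FA[OF \<beta>(1) 1] ak by simp
      ultimately have "pev u \<alpha> = 0" using routeS2 ga1 ga0 by blast
      then show False using contra 1 by simp
    next
      case 2
      define k2 where "k2 = t + n1"
      have k2: "1 \<le> k2" using 2 n01 by (simp add: k2_def k_def)
      have dk: "\<delta> = \<beta> + of_int k2" using gt by (simp add: \<delta>_def k2_def algebra_simps)
      have dk1: "\<delta> + 1 = \<beta> + of_int (k2 + 1)" using dk by simp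
      have "\<delta> \<notin> ZZ" using FB[OF \<beta>(1) k2] dk by simp
      moreover have "\<delta> + 1 \<notin> ZZ" unfolding dk1 using k2 by (intro FB[OF \<beta>(1)]) simp
      moreover have "pev (ell r) \<delta> \<noteq> 0" using FA[OF \<beta>(1) k2] dk by simp
      ultimately have "pev u \<delta> = 0" using routeS1 gd0 gd1 by blast
      then have "poly PP (\<beta> + of_int k2) = 0" using dk by simp
      then have "k2 = 0" using SF_contra PP_beta[OF \<beta>(1)] by blast
      then show False using k2 by simp
    next
      case 3
      show False
      proof (cases "\<alpha> + 1 \<in> ZZ")
        case True
        have "\<alpha> \<in> ZZ \<or> (\<forall>j::int. j < 0 \<longrightarrow> pev (ell r) (\<alpha> + of_int j) \<noteq> 0)"
        proof (cases "\<alpha> \<in> ZZ")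
          case False
          have "pev (ell r) (\<alpha> + of_int j) \<noteq> 0" if "j < 0" for j
            using FC[OF \<beta>(1), of k j] 3 False that ak by simp
          then show ?thesis by blast
        qed simp
        then have "pev u \<alpha> = 0" using routeI True ga1 ga0 by blast
        then show False using contra 3 by simp
      next
        case False
        have "\<alpha> \<notin> ZZ"
        proof
          assume "\<alpha> \<in> ZZ"
          moreover have "k + 1 \<le> 0" using 3 by simp
          ultimately have "\<alpha> + 1 \<in> ZZ" using FD[OF \<beta>(1) _ _ ak1] by blast
          with False show False by simp
        qed
        moreover have "pev (ell 0) \<alpha> \<noteq> 0"
        proof -
          have e: "\<beta> + of_int (k + 1) + of_int (-1) = \<alpha>" using ak by simp
          have "\<beta> + of_int (k + 1) \<notin> ZZ" using False ak1 by simp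
          then have "pev (ell 0 * ell r) (\<beta> + of_int (k + 1) + of_int (-1)) \<noteq> 0"
            using 3 by (intro FC[OF \<beta>(1)]) auto
          then show ?thesis unfolding e by simp
        qed
        ultimately have "pev u \<alpha> = 0" using routeS2 False ga1 ga0 by blast
        then show False using contra 3 by simp
      qed
    qed
  next
    case False
    then have nr: "\<forall>\<rho>\<in>roots_l0lr ell r. \<not> same_orbit \<rho> \<gamma>" by blast
    have "\<alpha> \<notin> ZZ" "pev (ell 0) \<alpha> \<noteq> 0" using rootless[OF nr, of "n0 - 1"] by (simp_all add: \<alpha>_def)
    moreover have "\<alpha> + 1 \<notin> ZZ" unfolding a1 by (rule rootless(1)[OF nr])
    ultimately have ua: "pev u \<alpha> = 0" using routeS2 ga1 ga0 by blast
    have "\<delta> \<notin> ZZ" "pev (ell r) \<delta> \<noteq> 0" using rootless[OF nr, of n1] by (simp_all add: \<delta>_def)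
    moreover have "\<delta> + 1 \<notin> ZZ" unfolding d1 by (rule rootless(1)[OF nr])
    ultimately have ud: "pev u \<delta> = 0" using routeS1 gd0 gd1 by blast
    have "\<delta> = \<alpha> + of_int (n1 - n0 + 1)" by (simp add: \<alpha>_def \<delta>_def algebra_simps)
    then have "n1 - n0 + 1 = 0" using SF_contra[of \<alpha> "n1 - n0 + 1"] ua ud by simp
    then show False using n01 by simp
  qed
qed

end
end

lemma Fract_sum: "(e::'a::idom) \<noteq> 0 \<Longrightarrow> (\<Sum>i\<in>A. Fract (w i) e) = Fract (\<Sum>i\<in>A. w i) e"
proof (induction A rule: infinite_finite_induct)
  case (infinite A) then show ?case by (simp add: fract_collapse)
next
  case empty then show ?case by (simp add: fract_collapse)
next
  case (insert x F)
  then have "(\<Sum>i\<in>insert x F. Fract (w i) e) = Fract (w x) e + Fract (\<Sum>i\<in>F. w i) e" by simp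
  also have "\<dots> = Fract ((w x + (\<Sum>i\<in>F. w i)) * e) (e * e)" using insert.prems by (simp add: algebra_simps)
  also have "\<dots> = Fract (w x + (\<Sum>i\<in>F. w i)) e" using insert.prems
    by (metis mult.commute mult_fract_cancel)
  finally show ?case using insert by simp
qed

lemma pshift_1: "pshift 1 = (1::'a::comm_ring_1 poly)"
  by (simp add: pshift_def one_pCons pcompose_pCons)

lemma lincomb_coords_eq:
  assumes "is_basis_A r W" "lincomb r x W = lincomb r y W" "k < r"
  shows "x k = y k"
proof -
  have "lincomb r (\<lambda>i. x i - y i) W = (\<lambda>_. 0)" using assms(2) by (simp add: lincomb_diff)
  then show ?thesis using assms(1,3) by (auto simp: is_basis_A_def)
qed

lemma shiftA_lincomb_M:
  assumes "\<forall>i<r. shiftA ell r (W i) = lincomb r (\<lambda>j. Fract (M i j) e) W"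
  shows "shiftA ell r (lincomb r a W) = lincomb r (\<lambda>k. \<Sum>i<r. rshift (a i) * Fract (M i k) e) W"
proof -
  have "shiftA ell r (lincomb r a W) = (\<lambda>j. \<Sum>i<r. rshift (a i) * lincomb r (\<lambda>k. Fract (M i k) e) W j)"
    unfolding shiftA_lincomb using assms by (intro ext sum.cong) auto
  also have "\<dots> = lincomb r (\<lambda>k. \<Sum>i<r. rshift (a i) * Fract (M i k) e) W"
    unfolding lincomb_def
  proof (intro ext)
    fix j
    show "(\<Sum>i<r. rshift (a i) * (\<Sum>k<r. Fract (M i k) e * W k j)) = (\<Sum>k<r. (\<Sum>i<r. rshift (a i) * Fract (M i k) e) * W k j)"
      unfolding sum_distrib_left sum_distrib_right mult.assoc by (rule sum.swap)
  qed
  finally show ?thesis .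
qed

theorem mainTheorem9:
  fixes ell :: "nat \<Rightarrow> 'a::{field_char_0, field_gcd} poly" and r :: nat
    and B :: "'a alg_closure set" and W :: "nat \<Rightarrow> nat \<Rightarrow> 'a poly fract"
    and e :: "'a poly" and M :: "nat \<Rightarrow> nat \<Rightarrow> 'a poly"
    and c :: "nat \<Rightarrow> 'a poly" and u :: "'a poly"
  assumes "ell 0 \<noteq> 0" and "ell r \<noteq> 0"
    and "suitable_basis ell r B W"
    and "\<forall>i<r. shiftA ell r (W i) = lincomb r (\<lambda>j. Fract (M i j) e) W"
    and "Gcd (insert u (c ` {..<r})) = 1"
    and "shift_free (map_poly to_ac u * (\<Prod>\<beta>\<in>B. [:- \<beta>, 1:]))"
    and "summable_A ell r (lincomb r (\<lambda>i. Fract (c i) u) W)"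
  shows "u dvd e \<and>
    (\<exists>b :: nat \<Rightarrow> 'a poly. lincomb r (\<lambda>i. Fract (c i) u) W
        = deltaA ell r (lincomb r (\<lambda>i. Fract (b i) 1) W))"
proof (cases "r = 0")
  case True
  then have "normalize u = 1" using assms(5) by simp
  then have "u dvd 1" by (metis is_unit_normalize one_dvd normalize_1_iff)
  then have "u dvd e" by (rule unit_imp_dvd)
  moreover have "lincomb r (\<lambda>i. Fract (c i) u) W = deltaA ell r (lincomb r (\<lambda>i. Fract 0 1) W)"
    using True by (simp add: lincomb_def deltaA_def shiftA_def)
  ultimately show ?thesis by (intro conjI exI[of _ "\<lambda>i. 0"])
next
  case False
  then have r0: "0 < r" by simp
  note A = assms(1,2,3,6)
  have basis: "is_basis_A r W" by (rule basis[OF A])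
  obtain g where gA: "g \<in> Avec r" and hg: "lincomb r (\<lambda>i. Fract (c i) u) W = deltaA ell r g"
    using assms(7) by (auto simp: summable_A_def)
  obtain a where ga: "g = lincomb r a W" using basis gA by (auto simp: is_basis_A_def)
  have allg: "\<And>z. good r W g z" using all_good[OF A gA hg ga r0] .
  have aloc: "\<And>i z. i < r \<Longrightarrow> a i \<in> loc_ring z"
    using allg good_iff_coords[OF basis, of a] ga by blast
  define b where "b i = (SOME p. a i = Fract p 1)" for i
  have ab: "a i = Fract (b i) 1" if "i < r" for i
  proof -
    have "\<exists>p. a i = Fract p 1" using loc_all_poly[of "a i"] aloc[OF that] by blast
    then show ?thesis unfolding b_def by (rule someI_ex)
  qed
  have gb: "g = lincomb r (\<lambda>i. Fract (b i) 1) W"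
    unfolding ga lincomb_def using ab by (intro ext sum.cong) auto
  have part2: "lincomb r (\<lambda>i. Fract (c i) u) W = deltaA ell r (lincomb r (\<lambda>i. Fract (b i) 1) W)"
    using hg gb by simp
  have "u dvd e"
  proof (cases "e = 0")
    case True then show ?thesis by simp
  next
    case e0: False
    have u0: "u \<noteq> 0" by (rule u_nz[OF A])
    define N where "N k = (\<Sum>i<r. pshift (b i) * M i k) - b k * e" for k
    have Sg: "shiftA ell r g = lincomb r (\<lambda>k. \<Sum>i<r. rshift (Fract (b i) 1) * Fract (M i k) e) W"
      unfolding gb by (rule shiftA_lincomb_M[OF assms(4)])
    have "lincomb r (\<lambda>i. Fract (c i) u) W = (\<lambda>j. shiftA ell r g j - g j)"
      using hg by (simp add: deltaA_def)
    also have "\<dots> = lincomb r (\<lambda>k. (\<Sum>i<r. rshift (Fract (b i) 1) * Fract (M i k) e) - Fract (b k) 1) W"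
      unfolding Sg lincomb_diff using gb by simp
    finally have eqc: "lincomb r (\<lambda>i. Fract (c i) u) W = lincomb r (\<lambda>k. (\<Sum>i<r. rshift (Fract (b i) 1) * Fract (M i k) e) - Fract (b k) 1) W" .
    have dv: "u dvd e * x" if xin: "x \<in> insert u (c ` {..<r})" for x
    proof (cases "x = u")
      case True then show ?thesis by simp
    next
      case False
      then obtain k where k: "k < r" "x = c k" using xin by auto
      have "Fract (c k) u = (\<Sum>i<r. rshift (Fract (b i) 1) * Fract (M i k) e) - Fract (b k) 1"
        using lincomb_coords_eq[OF basis eqc k(1)] .
      also have "\<dots> = (\<Sum>i<r. Fract (pshift (b i) * M i k) e) - Fract (b k) 1"
        by (simp add: rshift_Fract pshift_1)
      also have "\<dots> = Fract (N k) e" using e0 by (simp add: Fract_sum N_def)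
      finally have "c k * e = N k * u" using u0 e0 by (simp add: eq_fract)
      then show ?thesis using k by (simp add: mult.commute)
    qed
    have "u dvd Gcd ((*) e ` insert u (c ` {..<r}))" using dv by (intro Gcd_greatest) auto
    also have "\<dots> = normalize (e * Gcd (insert u (c ` {..<r})))" by (rule Gcd_mult)
    finally show ?thesis using assms(5) by simp
  qed
  then show ?thesis using part2 by blast
qed

end
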